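(* Let $n\ge1$, $1\le m\le n$, and let $T$ be the tree with vertex set $\{x_0,x_1,\dots,x_n,y_1,\dots,y_m\}$ and edge set $\{\{x_0,x_i\}:1\le i\le n\}\cup\{\{x_i,y_i\}:1\le i\le m\}$. Let $S=\Bbbk[x_0,\dots,x_n,y_1,\dots,y_m]$ ($\Bbbk$ a field), ordered by the reverse lexicographic order with $x_0>x_1>\dots>x_n>y_1>\dots>y_m$, and write the minimal monomial generators of $I(T^2)$ as $u_1>_{revlex}u_2>_{revlex}\dots>_{revlex}u_N$. (These generators are $x_ax_b$ for $0\le a<b\le n$, $x_0y_b$ for $1\le b\le m$, and $x_ay_a$ for $1\le a\le m$.) Then for all $2\le i\le N$: $$\langle u_1,\dots,u_{i-1}\rangle:\langle u_i\rangle=\begin{cases}\langle x_0,\dots,\widehat{x_a},\dots,x_{b-1}\rangle, & u_i=x_ax_b,\ 0\le a<b\le n,\\ \langle x_1,\dots,x_n,y_1,\dots,y_{b-1}\rangle, & u_i=x_0y_b,\ 1\le b\le m,\\ \langle x_0,\dots,\widehat{x_a},\dots,x_n\rangle, & u_i=x_ay_a,\ 1\le a\le m,\end{cases}$$ where $\widehat{x_a}$ means $x_a$ is omitted. In particular $I(T^2)$ has linear quotients with respect to this order.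
   Context: The square $T^2$ of a graph $T$ is the graph on $V(T)$ with edges the pairs at distance 1 or 2 in $T$. The edge ideal is $I(G)=\langle x_ux_v:\{u,v\}\in E(G)\rangle$, identifying vertices with variables. Reverse lexicographic order: for monomials $u=\prod z_k^{a_k}$, $v=\prod z_k^{b_k}$ in variables $z_1>\dots>z_r$, $u>_{revlex}v$ if $\deg u>\deg v$, or $\deg u=\deg v$ and for some $s$ one has $a_r=b_r,\dots,a_{s+1}=b_{s+1}$ and $a_s<b_s$. A monomial ideal with ordered minimal generators $u_1,\dots,u_N$ has linear quotients if each colon ideal $\langle u_1,\dots,u_{j-1}\rangle:\langle u_j\rangle$, $2\le j\le N$, is generated by variables. *)

theory Defs
  imports Main
begin

datatype var = X nat | Y nat

definition verts :: "nat \<Rightarrow> nat \<Rightarrow> var set" where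
  "verts n m = {X i | i. i \<le> n} \<union> {Y i | i. 1 \<le> i \<and> i \<le> m}"

definition tree_edge :: "nat \<Rightarrow> nat \<Rightarrow> var \<Rightarrow> var \<Rightarrow> bool" where
  "tree_edge n m u v \<longleftrightarrow>
     (\<exists>i. 1 \<le> i \<and> i \<le> n \<and> ({u, v} = {X 0, X i})) \<or>
     (\<exists>i. 1 \<le> i \<and> i \<le> m \<and> ({u, v} = {X i, Y i}))"

definition sq_edge :: "nat \<Rightarrow> nat \<Rightarrow> var \<Rightarrow> var \<Rightarrow> bool" where
  "sq_edge n m u v \<longleftrightarrow> u \<in> verts n m \<and> v \<in> verts n m \<and> u \<noteq> v \<and>
     (tree_edge n m u v \<or> (\<exists>w \<in> verts n m. tree_edge n m u w \<and> tree_edge n m w v))"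

text \<open>Monomials of S = k[verts] as exponent vectors supported on the variables.\<close>
type_synonym monomial = "var \<Rightarrow> nat"

definition monoms :: "nat \<Rightarrow> nat \<Rightarrow> monomial set" where
  "monoms n m = {w. \<forall>z. z \<notin> verts n m \<longrightarrow> w z = 0}"

definition mdvd :: "monomial \<Rightarrow> monomial \<Rightarrow> bool" where
  "mdvd u w \<longleftrightarrow> (\<forall>z. u z \<le> w z)"

definition mmult :: "monomial \<Rightarrow> monomial \<Rightarrow> monomial" where
  "mmult u w = (\<lambda>z. u z + w z)"

definition varmono :: "var \<Rightarrow> monomial" where
  "varmono v = (\<lambda>z. if z = v then 1 else 0)"

text \<open>A monomial ideal is determined by the monomials it contains; the monomial ideal
  generated by a set G of monomials contains exactly the monomials divisible by some g in G.\<close>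
definition monideal :: "nat \<Rightarrow> nat \<Rightarrow> monomial set \<Rightarrow> monomial set" where
  "monideal n m G = {w \<in> monoms n m. \<exists>g \<in> G. mdvd g w}"

definition colon :: "nat \<Rightarrow> nat \<Rightarrow> monomial set \<Rightarrow> monomial \<Rightarrow> monomial set" where
  "colon n m I u = {w \<in> monoms n m. mmult w u \<in> I}"

definition edge_ideal_sq :: "nat \<Rightarrow> nat \<Rightarrow> monomial set" where
  "edge_ideal_sq n m =
     monideal n m {mmult (varmono u) (varmono v) | u v. sq_edge n m u v}"

definition min_gens :: "monomial set \<Rightarrow> monomial set" where
  "min_gens I = {w \<in> I. \<forall>w' \<in> I. mdvd w' w \<longrightarrow> w' = w}"

text \<open>Reverse lexicographic order with x_0 > ... > x_n > y_1 > ... > y_m: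
  the variable of rank k is z_{k+1} in the paper's indexing (rank 0 largest).\<close>
definition rank :: "nat \<Rightarrow> var \<Rightarrow> nat" where
  "rank n v = (case v of X i \<Rightarrow> i | Y i \<Rightarrow> n + i)"

definition mdeg :: "nat \<Rightarrow> nat \<Rightarrow> monomial \<Rightarrow> nat" where
  "mdeg n m w = (\<Sum>z \<in> verts n m. w z)"

definition revlex_gt :: "nat \<Rightarrow> nat \<Rightarrow> monomial \<Rightarrow> monomial \<Rightarrow> bool" where
  "revlex_gt n m u v \<longleftrightarrow> mdeg n m u > mdeg n m v \<or>
     (mdeg n m u = mdeg n m v \<and>
      (\<exists>s \<in> verts n m. (\<forall>z \<in> verts n m. rank n z > rank n s \<longrightarrow> u z = v z) \<and> u s < v s))"

text \<open>Linear quotients for an ordered list of generators (0-indexed).\<close>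
definition linear_quotients :: "nat \<Rightarrow> nat \<Rightarrow> monomial list \<Rightarrow> bool" where
  "linear_quotients n m us \<longleftrightarrow>
     (\<forall>i. 1 \<le> i \<and> i < length us \<longrightarrow>
        (\<exists>C \<subseteq> verts n m. colon n m (monideal n m (set (take i us))) (us ! i)
                             = monideal n m (varmono ` C)))"

end

theory Submission
  imports Defs
begin

definition gen :: "var \<Rightarrow> var \<Rightarrow> monomial" where
  "gen p q = mmult (varmono p) (varmono q)"

lemma gen_apply: "gen p q z = (if z = p then 1 else 0) + (if z = q then 1 else 0)"
  by (simp add: gen_def mmult_def varmono_def)

lemma gen_sym: "gen p q = gen q p"
  by (auto simp: gen_def mmult_def)

lemma X_verts[simp]: "X i \<in> verts n m \<longleftrightarrow> i \<le> n"
  by (auto simp: verts_def)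
lemma Y_verts[simp]: "Y i \<in> verts n m \<longleftrightarrow> 1 \<le> i \<and> i \<le> m"
  by (auto simp: verts_def)
lemma rank_simps[simp]: "rank n (X i) = i" "rank n (Y i) = n + i"
  by (auto simp: rank_def)

lemma rank_inj: "p \<in> verts n m \<Longrightarrow> q \<in> verts n m \<Longrightarrow> rank n p = rank n q \<Longrightarrow> p = q"
  by (cases p; cases q; auto)

lemma finite_verts: "finite (verts n m)"
proof -
  have "verts n m \<subseteq> X ` {..n} \<union> Y ` {..m}" by (auto simp: verts_def)
  thus ?thesis by (rule finite_subset) auto
qed

lemma mdvd_var: "mdvd (varmono c) w \<longleftrightarrow> 1 \<le> w c"
  by (auto simp: mdvd_def varmono_def)

lemma mdvd_gen: "p \<noteq> q \<Longrightarrow> mdvd (gen p q) w \<longleftrightarrow> 1 \<le> w p \<and> 1 \<le> w q"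
  by (auto simp: mdvd_def gen_apply)

lemma sum_ind: "finite A \<Longrightarrow> (\<Sum>z\<in>A. (if z = p then 1 else 0::nat)) = (if p \<in> A then 1 else 0)"
  by (simp add: sum.delta)

lemma mdeg_gen: "p \<in> verts n m \<Longrightarrow> q \<in> verts n m \<Longrightarrow> mdeg n m (gen p q) = 2"
  by (simp add: mdeg_def gen_apply sum.distrib finite_verts sum_ind)


lemma revlex_irrefl: "\<not> revlex_gt n m u u"
  by (auto simp: revlex_gt_def)

lemma revlex_asym: "revlex_gt n m u v \<Longrightarrow> \<not> revlex_gt n m v u"
proof
  assume a: "revlex_gt n m u v" and b: "revlex_gt n m v u"
  then have d: "mdeg n m u = mdeg n m v" by (auto simp: revlex_gt_def)
  from a d obtain s where s: "s \<in> verts n m" "\<forall>z\<in>verts n m. rank n z > rank n s \<longrightarrow> u z = v z" "u s < v s"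
    by (auto simp: revlex_gt_def)
  from b d obtain t where t: "t \<in> verts n m" "\<forall>z\<in>verts n m. rank n z > rank n t \<longrightarrow> v z = u z" "v t < u t"
    by (auto simp: revlex_gt_def)
  show False
  proof (cases "rank n s" "rank n t" rule: linorder_cases)
    case less then show ?thesis using s t by force
  next
    case equal then have "s = t" using rank_inj s t by blast
    then show ?thesis using s t by simp
  next
    case greater then show ?thesis using s t by force
  qed
qed

lemma gt_ord:
  assumes v: "p \<in> verts n m" "q \<in> verts n m" "p' \<in> verts n m" "q' \<in> verts n m"
    and o: "rank n p < rank n q" "rank n p' < rank n q'"
  shows "revlex_gt n m (gen p q) (gen p' q') \<longleftrightarrow>
     rank n q < rank n q' \<or> (rank n q = rank n q' \<and> rank n p < rank n p')"
proof
  have ne: "p \<noteq> q" "p' \<noteq> q'" using o by auto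
  assume "revlex_gt n m (gen p q) (gen p' q')"
  then obtain s where s: "s \<in> verts n m" "\<forall>z\<in>verts n m. rank n z > rank n s \<longrightarrow> gen p q z = gen p' q' z"
     "gen p q s < gen p' q' s"
    using mdeg_gen v by (auto simp: revlex_gt_def)
  have s1: "s = p' \<or> s = q'" "s \<noteq> p" "s \<noteq> q" using s(3) ne by (auto simp: gen_apply split: if_splits)
  have hp: "rank n s < rank n p \<longrightarrow> (p = p' \<or> p = q')" using s(2) v(1) ne by (auto simp: gen_apply split: if_splits)
  have hq: "rank n s < rank n q \<longrightarrow> (q = p' \<or> q = q')" using s(2) v(2) ne by (auto simp: gen_apply split: if_splits)
  have i1: "rank n s \<noteq> rank n p" "rank n s \<noteq> rank n q" using rank_inj s(1) v s1 by metis+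
  show "rank n q < rank n q' \<or> (rank n q = rank n q' \<and> rank n p < rank n p')"
    using s1 hp hq i1 o by auto
next
  assume k: "rank n q < rank n q' \<or> (rank n q = rank n q' \<and> rank n p < rank n p')"
  have d: "mdeg n m (gen p q) = mdeg n m (gen p' q')" using mdeg_gen v by simp
  show "revlex_gt n m (gen p q) (gen p' q')"
  proof (cases "rank n q < rank n q'")
    case True
    have "\<forall>z\<in>verts n m. rank n z > rank n q' \<longrightarrow> gen p q z = gen p' q' z"
      using True o by (auto simp: gen_apply)
    moreover have "gen p q q' < gen p' q' q'" using True o by (auto simp: gen_apply)
    ultimately show ?thesis using d v unfolding revlex_gt_def by blast
  next
    case False
    with k have e: "q = q'" "rank n p < rank n p'" using rank_inj v by auto
    have "\<forall>z\<in>verts n m. rank n z > rank n p' \<longrightarrow> gen p q z = gen p' q' z"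
      using e o by (auto simp: gen_apply)
    moreover have "gen p q p' < gen p' q' p'" using e o by (auto simp: gen_apply)
    ultimately show ?thesis using d v unfolding revlex_gt_def by blast
  qed
qed


definition G :: "nat \<Rightarrow> nat \<Rightarrow> monomial set" where
  "G n m = {gen (X a) (X b) | a b. a < b \<and> b \<le> n} \<union> {gen (X 0) (Y b) | b. 1 \<le> b \<and> b \<le> m}
     \<union> {gen (X a) (Y a) | a. 1 \<le> a \<and> a \<le> m}"

lemma sq_edge_G: "m \<le> n \<Longrightarrow> sq_edge n m u v \<Longrightarrow> gen u v \<in> G n m"
  unfolding sq_edge_def tree_edge_def G_def
  apply (elim conjE disjE exE bexE)
  apply (auto simp: doubleton_eq_iff gen_sym)
  apply (metis gen_sym linorder_neqE_nat)
  done


lemma G_sq_edge: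
  assumes "m \<le> n" "g \<in> G n m" shows "\<exists>u v. g = gen u v \<and> sq_edge n m u v"
proof -
  from assms(2) consider (xx) a b where "a < b" "b \<le> n" "g = gen (X a) (X b)"
    | (xy) b where "1 \<le> b" "b \<le> m" "g = gen (X 0) (Y b)"
    | (yy) a where "1 \<le> a" "a \<le> m" "g = gen (X a) (Y a)"
    unfolding G_def by blast
  then show ?thesis
  proof cases
    case xx
    show ?thesis
    proof (cases "a = 0")
      case True
      have "tree_edge n m (X 0) (X b)" using xx True unfolding tree_edge_def by (intro disjI1 exI[of _ b]) auto
      then have "sq_edge n m (X a) (X b)" using xx True
        unfolding sq_edge_def by auto
      then show ?thesis using xx by blast
    next
      case False
      have "tree_edge n m (X a) (X 0)" "tree_edge n m (X 0) (X b)"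
        using xx False unfolding tree_edge_def by (auto simp: doubleton_eq_iff)
      then have "sq_edge n m (X a) (X b)" using xx unfolding sq_edge_def by force
      then show ?thesis using xx by blast
    qed
  next
    case xy
    have "tree_edge n m (X 0) (X b)" "tree_edge n m (X b) (Y b)"
      using xy assms(1) unfolding tree_edge_def by (auto simp: doubleton_eq_iff)
    then have "sq_edge n m (X 0) (Y b)" using xy assms(1) unfolding sq_edge_def by force
    then show ?thesis using xy by blast
  next
    case yy
    have "sq_edge n m (X a) (Y a)" using yy assms(1)
      unfolding sq_edge_def tree_edge_def by auto
    then show ?thesis using yy by blast
  qed
qed

lemma edge_ideal_G: "m \<le> n \<Longrightarrow> edge_ideal_sq n m = monideal n m (G n m)"
proof -
  assume "m \<le> n"
  then have "{mmult (varmono u) (varmono v) | u v. sq_edge n m u v} = G n m"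
    using sq_edge_G G_sq_edge unfolding gen_def by fastforce
  then show ?thesis unfolding edge_ideal_sq_def by simp
qed

lemma G_shape: "m \<le> n \<Longrightarrow> g \<in> G n m \<Longrightarrow> \<exists>p q. g = gen p q \<and> p \<noteq> q \<and> p \<in> verts n m \<and> q \<in> verts n m"
  unfolding G_def by fastforce

lemma gen_monoms: "p \<in> verts n m \<Longrightarrow> q \<in> verts n m \<Longrightarrow> gen p q \<in> monoms n m"
  by (auto simp: monoms_def gen_apply)

lemma mdvd_refl: "mdvd u u" by (simp add: mdvd_def)

lemma gen_dvd_gen: "p \<noteq> q \<Longrightarrow> p' \<noteq> q' \<Longrightarrow> mdvd (gen p' q') (gen p q) \<Longrightarrow> gen p' q' = gen p q"
  by (auto simp: mdvd_gen gen_apply split: if_splits intro: gen_sym)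

lemma min_gens_G: "m \<le> n \<Longrightarrow> min_gens (monideal n m (G n m)) = G n m"
proof (rule set_eqI, rule iffI)
  assume mn: "m \<le> n"
  fix w assume w: "w \<in> min_gens (monideal n m (G n m))"
  then obtain g where g: "g \<in> G n m" "mdvd g w" unfolding min_gens_def monideal_def by blast
  have "g \<in> monideal n m (G n m)" using g(1) G_shape[OF mn g(1)] gen_monoms mdvd_refl
    unfolding monideal_def by blast
  then have "g = w" using w g unfolding min_gens_def by blast
  then show "w \<in> G n m" using g by simp
next
  assume mn: "m \<le> n"
  fix g assume g: "g \<in> G n m"
  obtain p q where pq: "g = gen p q" "p \<noteq> q" "p \<in> verts n m" "q \<in> verts n m" using G_shape[OF mn g] by blast
  have gi: "g \<in> monideal n m (G n m)" using g pq gen_monoms mdvd_refl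
    unfolding monideal_def by blast
  have "w' = g" if w'h: "w' \<in> monideal n m (G n m)" "mdvd w' g" for w'
  proof -
    obtain g' where g': "g' \<in> G n m" "mdvd g' w'" using w'h unfolding monideal_def by blast
    obtain p' q' where pq': "g' = gen p' q'" "p' \<noteq> q'" using G_shape[OF mn g'(1)] by blast
    have "mdvd g' g" using g'(2) w'h(2) unfolding mdvd_def using le_trans by blast
    then have "g' = g" using gen_dvd_gen pq pq' by blast
    then show ?thesis using g'(2) w'h(2) unfolding mdvd_def by (simp add: antisym le_funI)
  qed
  then show "g \<in> min_gens (monideal n m (G n m))" using gi unfolding min_gens_def by blast
qed


lemma G_ex: "(\<exists>g\<in>G n m. P g) \<longleftrightarrow>
   (\<exists>a b. a < b \<and> b \<le> n \<and> P (gen (X a) (X b))) \<or> (\<exists>b. 1 \<le> b \<and> b \<le> m \<and> P (gen (X 0) (Y b)))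
   \<or> (\<exists>a. 1 \<le> a \<and> a \<le> m \<and> P (gen (X a) (Y a)))"
  unfolding G_def by blast

lemma mmult_apply: "mmult w u z = w z + u z" by (simp add: mmult_def)

lemma case1:
  assumes "m \<le> n" "a < b" "b \<le> n"
  shows "(\<exists>g\<in>G n m. revlex_gt n m g (gen (X a) (X b)) \<and> mdvd g (mmult w (gen (X a) (X b))))
     \<longleftrightarrow> (\<exists>k. k < b \<and> k \<noteq> a \<and> 1 \<le> w (X k))"
  unfolding G_ex using assms
  apply (simp add: gt_ord mdvd_gen mmult_apply gen_apply cong: conj_cong)
  apply (rule iffI)
   apply (elim exE; auto)
    subgoal for x by (drule spec[of _ x]) simp
   subgoal for x by (rule exI[of _ x]) simp
  apply (elim exE conjE)
  subgoal for k
    apply (cases "k < a")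
     apply (rule exI[of _ k]; simp; rule exI[of _ a]; simp)
    apply (rule exI[of _ a]; simp; rule exI[of _ k]; simp)
    done
  done


lemma case2:
  assumes "m \<le> n" "1 \<le> b" "b \<le> m"
  shows "(\<exists>g\<in>G n m. revlex_gt n m g (gen (X 0) (Y b)) \<and> mdvd g (mmult w (gen (X 0) (Y b))))
     \<longleftrightarrow> (\<exists>k. 1 \<le> k \<and> k \<le> n \<and> 1 \<le> w (X k)) \<or> (\<exists>k. 1 \<le> k \<and> k < b \<and> 1 \<le> w (Y k))"
  unfolding G_ex using assms
  apply (simp add: gt_ord mdvd_gen mmult_apply gen_apply cong: conj_cong)
  apply (rule iffI)
   apply (elim disjE exE conjE)
     apply (auto)[3]
  apply (elim disjE exE conjE)
   subgoal for k by (rule disjI1, rule exI[of _ 0]; simp; rule exI[of _ k]; simp)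
  subgoal for k by auto
  done

lemma case3:
  assumes "m \<le> n" "1 \<le> a" "a \<le> m"
  shows "(\<exists>g\<in>G n m. revlex_gt n m g (gen (X a) (Y a)) \<and> mdvd g (mmult w (gen (X a) (Y a))))
     \<longleftrightarrow> (\<exists>k. k \<le> n \<and> k \<noteq> a \<and> 1 \<le> w (X k))"
  unfolding G_ex using assms
  apply (simp add: gt_ord mdvd_gen mmult_apply gen_apply cong: conj_cong)
  apply (rule iffI)
   apply (elim disjE exE conjE)
     apply (auto)[3]
    subgoal for x by (drule spec[of _ x]) simp
   subgoal for x by (rule exI[of _ x]) simp
   subgoal for x by (rule exI[of _ x]) simp
  apply (elim disjE exE conjE)
  subgoal for k
    apply (cases "k < a")
     apply (rule disjI1, rule exI[of _ k]; simp; rule exI[of _ a]; simp)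
    apply (rule disjI1, rule exI[of _ a]; simp; rule exI[of _ k]; simp)
    done
  done


lemma take_set:
  assumes "sorted_wrt (revlex_gt n m) us" "i < length us"
  shows "set (take i us) = {g \<in> set us. revlex_gt n m g (us ! i)}"
proof (rule set_eqI, rule iffI)
  fix g assume "g \<in> set (take i us)"
  then obtain j where j: "j < i" "g = us ! j" using assms(2)
    by (auto simp: in_set_conv_nth)
  then show "g \<in> {g \<in> set us. revlex_gt n m g (us ! i)}"
    using assms sorted_wrt_nth_less by fastforce
next
  fix g assume g: "g \<in> {g \<in> set us. revlex_gt n m g (us ! i)}"
  then obtain j where j: "j < length us" "g = us ! j" by (auto simp: in_set_conv_nth)
  have "j < i"
  proof (rule ccontr)
    assume "\<not> j < i"
    then consider "j = i" | "i < j" by linarith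
    then show False
    proof cases
      case 1 then show False using g j revlex_irrefl by auto
    next
      case 2 then have "revlex_gt n m (us ! i) (us ! j)" using assms sorted_wrt_nth_less j by blast
      then show False using g j revlex_asym by blast
    qed
  qed
  then show "g \<in> set (take i us)" using j assms(2) by (auto simp: in_set_conv_nth)
qed

lemma colon_eq:
  assumes "u \<in> monoms n m"
  shows "colon n m (monideal n m E) u = {w \<in> monoms n m. \<exists>g\<in>E. mdvd g (mmult w u)}"
  using assms by (auto simp: colon_def monideal_def monoms_def mmult_def)

lemma monideal_var: "monideal n m (varmono ` C) = {w \<in> monoms n m. \<exists>c\<in>C. 1 \<le> w c}"
  by (auto simp: monideal_def mdvd_var)

lemma main_colon:
  assumes "m \<le> n" "set us = G n m" "sorted_wrt (revlex_gt n m) us" "i < length us"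
  shows "colon n m (monideal n m (set (take i us))) (us ! i) =
     {w \<in> monoms n m. \<exists>g\<in>G n m. revlex_gt n m g (us ! i) \<and> mdvd g (mmult w (us ! i))}"
proof -
  have "us ! i \<in> G n m" using assms(2,4) nth_mem by metis
  then obtain p q where "us ! i = gen p q" "p \<in> verts n m" "q \<in> verts n m"
    using G_shape assms(1) by blast
  then have "us ! i \<in> monoms n m" using gen_monoms by simp
  then show ?thesis using take_set[OF assms(3,4)] assms(2) colon_eq by auto
qed

theorem proposition3p2:
  fixes n m :: nat and us :: "monomial list"
  assumes "1 \<le> n" and "1 \<le> m" and "m \<le> n"
    and "set us = min_gens (edge_ideal_sq n m)"
    and "sorted_wrt (revlex_gt n m) us"
  shows "(\<forall>i. 1 \<le> i \<and> i < length us \<longrightarrow>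
           (\<forall>a b. a < b \<and> b \<le> n \<and> us ! i = mmult (varmono (X a)) (varmono (X b)) \<longrightarrow>
              colon n m (monideal n m (set (take i us))) (us ! i)
                = monideal n m (varmono ` {X k | k. k < b \<and> k \<noteq> a})) \<and>
           (\<forall>b. 1 \<le> b \<and> b \<le> m \<and> us ! i = mmult (varmono (X 0)) (varmono (Y b)) \<longrightarrow>
              colon n m (monideal n m (set (take i us))) (us ! i)
                = monideal n m (varmono ` ({X k | k. 1 \<le> k \<and> k \<le> n} \<union> {Y k | k. 1 \<le> k \<and> k < b}))) \<and>
           (\<forall>a. 1 \<le> a \<and> a \<le> m \<and> us ! i = mmult (varmono (X a)) (varmono (Y a)) \<longrightarrow>
              colon n m (monideal n m (set (take i us))) (us ! i)
                = monideal n m (varmono ` {X k | k. k \<le> n \<and> k \<noteq> a})))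
         \<and> linear_quotients n m us"
proof -
  have sG: "set us = G n m" using assms(3,4) edge_ideal_G min_gens_G by simp
  note mc = main_colon[OF assms(3) sG assms(5)]
  have c1: "colon n m (monideal n m (set (take i us))) (us ! i)
                = monideal n m (varmono ` {X k | k. k < b \<and> k \<noteq> a})"
    if "i < length us" "a < b" "b \<le> n" "us ! i = gen (X a) (X b)" for i a b
    apply (subst mc[OF that(1)]) unfolding monideal_var that(4) using case1[OF assms(3) that(2,3)] by blast
  have c2: "colon n m (monideal n m (set (take i us))) (us ! i)
                = monideal n m (varmono ` ({X k | k. 1 \<le> k \<and> k \<le> n} \<union> {Y k | k. 1 \<le> k \<and> k < b}))"
    if "i < length us" "1 \<le> b" "b \<le> m" "us ! i = gen (X 0) (Y b)" for i b
    apply (subst mc[OF that(1)]) unfolding monideal_var that(4) using case2[OF assms(3) that(2,3)] by blast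
  have c3: "colon n m (monideal n m (set (take i us))) (us ! i)
                = monideal n m (varmono ` {X k | k. k \<le> n \<and> k \<noteq> a})"
    if "i < length us" "1 \<le> a" "a \<le> m" "us ! i = gen (X a) (Y a)" for i a
    apply (subst mc[OF that(1)]) unfolding monideal_var that(4) using case3[OF assms(3) that(2,3)] by blast
  have lq: "linear_quotients n m us"
    unfolding linear_quotients_def
  proof (intro allI impI)
    fix i assume i: "1 \<le> i \<and> i < length us"
    then have "us ! i \<in> G n m" using sG nth_mem by metis
    then consider (xx) a b where "a < b" "b \<le> n" "us ! i = gen (X a) (X b)"
      | (xy) b where "1 \<le> b" "b \<le> m" "us ! i = gen (X 0) (Y b)"
      | (yy) a where "1 \<le> a" "a \<le> m" "us ! i = gen (X a) (Y a)"
      unfolding G_def by blast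
    then show "\<exists>C\<subseteq>verts n m. colon n m (monideal n m (set (take i us))) (us ! i) = monideal n m (varmono ` C)"
    proof cases
      case xx
      then show ?thesis using c1[of i a b] i by (intro exI[of _ "{X k | k. k < b \<and> k \<noteq> a}"]) auto
    next
      case xy
      then show ?thesis using c2[of i b] i assms(3)
        by (intro exI[of _ "{X k | k. 1 \<le> k \<and> k \<le> n} \<union> {Y k | k. 1 \<le> k \<and> k < b}"]) auto
    next
      case yy
      then show ?thesis using c3[of i a] i by (intro exI[of _ "{X k | k. k \<le> n \<and> k \<noteq> a}"]) auto
    qed
  qed
  show ?thesis using c1 c2 c3 lq unfolding gen_def by blast
qed

end
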